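(* Let $p \in \mathbf{C}[x_1,\dots,x_n]$ be of the form $$p = x_1^{M_1}\cdots x_n^{M_n} + \sum_j c(j)\, x_1^{i_1(j)}\cdots x_n^{i_n(j)},$$ where the $c(j)\in\mathbf{C}$ are coefficients, all $M_i>0$, all monomials in the sum are different from $x_1^{M_1}\cdots x_n^{M_n}$, and $i_k(j)\le M_k$ for all $k,j$. If $q\in\mathbf{C}[x_1,\dots,x_n]$ and $\varphi(p)=q$ for some automorphism $\varphi$ of $\mathbf{C}[x_1,\dots,x_N]$ with $N\ge n$, then $\alpha(p)=q$ for some automorphism $\alpha$ of $\mathbf{C}[x_1,\dots,x_n]$.
   Context: Automorphisms are $\mathbf{C}$-algebra automorphisms; $\mathbf{C}[x_1,\dots,x_n]$ is regarded as a subalgebra of $\mathbf{C}[x_1,\dots,x_N]$. *)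

theory Defs
  imports Complex_Main "HOL-Library.Poly_Mapping"
begin

text \<open>Polynomials over C in countably many variables x_0, x_1, ...
  (x_k of the paper is variable k-1 here).\<close>

type_synonym mpoly = "(nat \<Rightarrow>\<^sub>0 nat) \<Rightarrow>\<^sub>0 complex"

definition const_mp :: "complex \<Rightarrow> mpoly" where
  "const_mp c = Poly_Mapping.single 0 c"

definition poly_in :: "nat \<Rightarrow> mpoly set" where
  "poly_in n = {p. \<forall>m \<in> Poly_Mapping.keys p. \<forall>v \<in> Poly_Mapping.keys m. v < n}"

definition is_alg_aut :: "nat \<Rightarrow> (mpoly \<Rightarrow> mpoly) \<Rightarrow> bool" where
  "is_alg_aut n \<phi> \<longleftrightarrow>
     bij_betw \<phi> (poly_in n) (poly_in n) \<and>
     (\<forall>p\<in>poly_in n. \<forall>q\<in>poly_in n. \<phi> (p + q) = \<phi> p + \<phi> q) \<and>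
     (\<forall>p\<in>poly_in n. \<forall>q\<in>poly_in n. \<phi> (p * q) = \<phi> p * \<phi> q) \<and>
     (\<forall>c. \<forall>p\<in>poly_in n. \<phi> (const_mp c * p) = const_mp c * \<phi> p) \<and>
     \<phi> 1 = 1"

end

theory Submission
  imports Defs "Jordan_Normal_Form.Determinant"
begin


definition Var :: "nat \<Rightarrow> mpoly" where
  "Var k = Poly_Mapping.single (Poly_Mapping.single k 1) 1"

lemma lookup_const_mult: "Poly_Mapping.lookup (const_mp c * a) m = c * Poly_Mapping.lookup a m"
  by (simp add: const_mp_def mult_map_scale_conv_mult[symmetric] map.rep_eq when_def)

lemma const_mp_mult: "const_mp c * const_mp d = const_mp (c * d)"
  by (simp add: const_mp_def mult_single)

lemma const_mp_1[simp]: "const_mp 1 = 1"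
  by (simp add: const_mp_def)

lemma const_mp_0[simp]: "const_mp 0 = 0"
  by (simp add: const_mp_def)

lemma keys_const_mult: "Poly_Mapping.keys (const_mp c * a) \<subseteq> Poly_Mapping.keys a"
  by (auto simp: in_keys_iff lookup_const_mult)

lemma single_as_const: "Poly_Mapping.single m c = const_mp c * Poly_Mapping.single m (1::complex)"
  by (simp add: const_mp_def mult_single)

lemma poly_expand: "(a :: 'a \<Rightarrow>\<^sub>0 'b::comm_monoid_add) =
   (\<Sum>m\<in>Poly_Mapping.keys a. Poly_Mapping.single m (Poly_Mapping.lookup a m))"
proof (rule poly_mapping_eqI)
  fix k
  have "(\<Sum>m\<in>Poly_Mapping.keys a. Poly_Mapping.lookup (Poly_Mapping.single m (Poly_Mapping.lookup a m)) k)
      = (\<Sum>m\<in>Poly_Mapping.keys a. if m = k then Poly_Mapping.lookup a m else 0)"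
    by (rule sum.cong) (auto simp: lookup_single when_def)
  also have "\<dots> = Poly_Mapping.lookup a k"
    by (simp add: sum.delta in_keys_iff)
  finally show "Poly_Mapping.lookup a k = Poly_Mapping.lookup (\<Sum>m\<in>Poly_Mapping.keys a. Poly_Mapping.single m (Poly_Mapping.lookup a m)) k"
    by (simp add: lookup_sum)
qed

lemma poly_inI: "(\<And>m v. m \<in> Poly_Mapping.keys a \<Longrightarrow> v \<in> Poly_Mapping.keys m \<Longrightarrow> v < n) \<Longrightarrow> a \<in> poly_in n"
  by (auto simp: poly_in_def)

lemma poly_inD: "a \<in> poly_in n \<Longrightarrow> m \<in> Poly_Mapping.keys a \<Longrightarrow> v \<in> Poly_Mapping.keys m \<Longrightarrow> v < n"
  by (auto simp: poly_in_def)

lemma poly_in_0[simp]: "0 \<in> poly_in n" by (auto simp: poly_in_def)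
lemma poly_in_1[simp]: "1 \<in> poly_in n" by (auto simp: poly_in_def)

lemma poly_in_add: "a \<in> poly_in n \<Longrightarrow> b \<in> poly_in n \<Longrightarrow> a + b \<in> poly_in n"
  using keys_add[of a b] by (auto simp: poly_in_def)

lemma poly_in_uminus: "a \<in> poly_in n \<Longrightarrow> - a \<in> poly_in n"
  by (auto simp: poly_in_def)

lemma poly_in_diff: "a \<in> poly_in n \<Longrightarrow> b \<in> poly_in n \<Longrightarrow> a - b \<in> poly_in n"
  using poly_in_add[of a n "-b"] poly_in_uminus[of b n] by simp

lemma poly_in_mult: "a \<in> poly_in n \<Longrightarrow> b \<in> poly_in n \<Longrightarrow> a * b \<in> poly_in n"
proof (rule poly_inI)
  fix m v assume a: "a \<in> poly_in n" and b: "b \<in> poly_in n"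
    and m: "m \<in> Poly_Mapping.keys (a * b)" and v: "v \<in> Poly_Mapping.keys m"
  from m keys_mult[of a b] obtain m1 m2 where "m = m1 + m2" "m1 \<in> Poly_Mapping.keys a" "m2 \<in> Poly_Mapping.keys b"
    by blast
  with v keys_add[of m1 m2] a b show "v < n" by (auto dest: poly_inD)
qed

lemma poly_in_const[simp]: "const_mp c \<in> poly_in n"
  by (auto simp: poly_in_def const_mp_def)

lemma poly_in_const_mult: "a \<in> poly_in n \<Longrightarrow> const_mp c * a \<in> poly_in n"
  by (simp add: poly_in_mult)

lemma poly_in_Var: "k < n \<Longrightarrow> Var k \<in> poly_in n"
  by (auto simp: poly_in_def Var_def)

lemma poly_in_mono: "n \<le> N \<Longrightarrow> a \<in> poly_in n \<Longrightarrow> a \<in> poly_in N"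
proof (rule poly_inI)
  fix m v assume "n \<le> N" "a \<in> poly_in n" "m \<in> Poly_Mapping.keys a" "v \<in> Poly_Mapping.keys m"
  then show "v < N" using poly_inD[of a n m v] by linarith
qed

lemma poly_in_sum: "(\<And>i. i \<in> I \<Longrightarrow> g i \<in> poly_in n) \<Longrightarrow> sum g I \<in> poly_in n"
  by (induction I rule: infinite_finite_induct) (auto intro: poly_in_add)

lemma poly_in_prod: "(\<And>i. i \<in> I \<Longrightarrow> g i \<in> poly_in n) \<Longrightarrow> prod g I \<in> poly_in n"
  by (induction I rule: infinite_finite_induct) (auto intro: poly_in_mult)

lemma poly_in_power: "a \<in> poly_in n \<Longrightarrow> a ^ e \<in> poly_in n"
  by (induction e) (auto intro: poly_in_mult)

lemma poly_in_single: "Poly_Mapping.keys m \<subseteq> {..<n} \<Longrightarrow> Poly_Mapping.single m c \<in> poly_in n"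
  by (auto simp: poly_in_def)

lemma single_single_pow: "Poly_Mapping.single (Poly_Mapping.single k e) (1::complex) = Var k ^ e"
proof (induction e)
  case 0 then show ?case by simp
next
  case (Suc e)
  have "Poly_Mapping.single (Poly_Mapping.single k (Suc e)) (1::complex)
      = Poly_Mapping.single (Poly_Mapping.single k 1 + Poly_Mapping.single k e) 1"
    by (simp add: single_add[symmetric])
  also have "\<dots> = Var k * Poly_Mapping.single (Poly_Mapping.single k e) 1"
    by (simp add: Var_def mult_single)
  finally show ?case using Suc by simp
qed

lemma single_sum_prod: "finite K \<Longrightarrow> Poly_Mapping.single (\<Sum>k\<in>K. g k) (1::complex) = (\<Prod>k\<in>K. Poly_Mapping.single (g k) 1)"
proof (induction K rule: finite_induct)
  case (insert x F)
  have "Poly_Mapping.single (sum g (insert x F)) (1::complex) = Poly_Mapping.single (g x + sum g F) 1"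
    using insert by simp
  also have "\<dots> = Poly_Mapping.single (g x) 1 * Poly_Mapping.single (sum g F) 1"
    by (simp only: mult_single mult_1)
  also have "\<dots> = Poly_Mapping.single (g x) 1 * (\<Prod>k\<in>F. Poly_Mapping.single (g k) 1)"
    by (simp only: insert.IH)
  also have "\<dots> = (\<Prod>k\<in>insert x F. Poly_Mapping.single (g k) 1)"
    by (simp only: prod.insert[OF insert.hyps])
  finally show ?case .
qed simp

lemma mono_prod:
  assumes "finite K" "Poly_Mapping.keys m \<subseteq> K"
  shows "Poly_Mapping.single m (1::complex) = (\<Prod>k\<in>K. Var k ^ Poly_Mapping.lookup m k)"
proof -
  have "m = (\<Sum>k\<in>K. Poly_Mapping.single k (Poly_Mapping.lookup m k))"
  proof (rule poly_mapping_eqI)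
    fix v
    have "(\<Sum>k\<in>K. Poly_Mapping.lookup (Poly_Mapping.single k (Poly_Mapping.lookup m k)) v)
        = (\<Sum>k\<in>K. if k = v then Poly_Mapping.lookup m k else 0)"
      by (rule sum.cong) (auto simp: lookup_single when_def)
    also have "\<dots> = Poly_Mapping.lookup m v"
      using assms by (auto simp: sum.delta in_keys_iff)
    finally show "Poly_Mapping.lookup m v = Poly_Mapping.lookup (\<Sum>k\<in>K. Poly_Mapping.single k (Poly_Mapping.lookup m k)) v"
      by (simp add: lookup_sum)
  qed
  then have "Poly_Mapping.single m (1::complex) = Poly_Mapping.single (\<Sum>k\<in>K. Poly_Mapping.single k (Poly_Mapping.lookup m k)) 1"
    by simp
  also have "\<dots> = (\<Prod>k\<in>K. Var k ^ Poly_Mapping.lookup m k)"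
    using assms by (simp add: single_sum_prod single_single_pow)
  finally show ?thesis .
qed

lemma poly_expand_mono: "(a::mpoly) = (\<Sum>m\<in>Poly_Mapping.keys a. const_mp (Poly_Mapping.lookup a m) * Poly_Mapping.single m 1)"
  by (subst poly_expand) (simp add: single_as_const[symmetric])

subsection \<open>Induction principle\<close>

lemma poly_in_induct[consumes 1, case_names const Var add mult]:
  assumes a: "a \<in> poly_in n"
    and C: "\<And>c. P (const_mp c)"
    and V: "\<And>k. k < n \<Longrightarrow> P (Var k)"
    and A: "\<And>a b. a \<in> poly_in n \<Longrightarrow> b \<in> poly_in n \<Longrightarrow> P a \<Longrightarrow> P b \<Longrightarrow> P (a + b)"
    and M: "\<And>a b. a \<in> poly_in n \<Longrightarrow> b \<in> poly_in n \<Longrightarrow> P a \<Longrightarrow> P b \<Longrightarrow> P (a * b)"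
  shows "P a"
proof -
  have P0: "P 0" using C[of 0] by simp
  have P1: "P 1" using C[of 1] by simp
  have S: "P (sum g I) \<and> sum g I \<in> poly_in n" if "\<And>i. i \<in> I \<Longrightarrow> g i \<in> poly_in n \<and> P (g i)" for g and I :: "'x set"
    using that
  proof (induction I rule: infinite_finite_induct)
    case (infinite A) then show ?case using P0 by simp
  next
    case empty then show ?case using P0 by simp
  next
    case (insert x F)
    have h: "g x \<in> poly_in n" "P (g x)" using insert.prems by auto
    have ih: "P (sum g F)" "sum g F \<in> poly_in n" using insert.IH insert.prems by auto
    have "P (g x + sum g F)" by (rule A[OF h(1) ih(2) h(2) ih(1)])
    moreover have "g x + sum g F \<in> poly_in n" by (rule poly_in_add[OF h(1) ih(2)])
    ultimately show ?case by (simp only: sum.insert[OF insert.hyps])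
  qed
  have Pr: "P (prod g I) \<and> prod g I \<in> poly_in n" if "\<And>i. i \<in> I \<Longrightarrow> g i \<in> poly_in n \<and> P (g i)" for g and I :: "'x set"
    using that
  proof (induction I rule: infinite_finite_induct)
    case (infinite A) then show ?case using P1 by simp
  next
    case empty then show ?case using P1 by simp
  next
    case (insert x F)
    have h: "g x \<in> poly_in n" "P (g x)" using insert.prems by auto
    have ih: "P (prod g F)" "prod g F \<in> poly_in n" using insert.IH insert.prems by auto
    have "P (g x * prod g F)" by (rule M[OF h(1) ih(2) h(2) ih(1)])
    moreover have "g x * prod g F \<in> poly_in n" by (rule poly_in_mult[OF h(1) ih(2)])
    ultimately show ?case by (simp only: prod.insert[OF insert.hyps])
  qed
  have Pw: "P (b ^ e)" if b: "b \<in> poly_in n" "P b" for b e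
  proof (induction e)
    case 0 then show ?case using P1 by simp
  next
    case (Suc e)
    have "P (b * b ^ e)" by (rule M[OF b(1) poly_in_power[OF b(1)] b(2) Suc])
    then show ?case by simp
  qed
  have mono: "P (Poly_Mapping.single m 1) \<and> Poly_Mapping.single m 1 \<in> poly_in n" if "m \<in> Poly_Mapping.keys a" for m
  proof -
    have K: "Poly_Mapping.keys m \<subseteq> {..<n}" using a that by (auto dest: poly_inD)
    have eq: "Poly_Mapping.single m (1::complex) = (\<Prod>k\<in>{..<n}. Var k ^ Poly_Mapping.lookup m k)"
      using mono_prod[OF _ K] by simp
    have "\<And>k. k \<in> {..<n} \<Longrightarrow> Var k ^ Poly_Mapping.lookup m k \<in> poly_in n \<and> P (Var k ^ Poly_Mapping.lookup m k)"
    proof -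
      fix k assume "k \<in> {..<n}"
      then have k: "k < n" by simp
      show "Var k ^ Poly_Mapping.lookup m k \<in> poly_in n \<and> P (Var k ^ Poly_Mapping.lookup m k)"
        using poly_in_power[OF poly_in_Var[OF k]] Pw[OF poly_in_Var[OF k] V[OF k]] by blast
    qed
    then have "P (\<Prod>k\<in>{..<n}. Var k ^ Poly_Mapping.lookup m k)"
      using Pr[of "{..<n}" "\<lambda>k. Var k ^ Poly_Mapping.lookup m k"] by blast
    then have "P (Poly_Mapping.single m 1)" by (simp only: eq)
    moreover have "Poly_Mapping.single m (1::complex) \<in> poly_in n" by (rule poly_in_single[OF K])
    ultimately show ?thesis by blast
  qed
  have T: "const_mp (Poly_Mapping.lookup a m) * Poly_Mapping.single m 1 \<in> poly_in n
     \<and> P (const_mp (Poly_Mapping.lookup a m) * Poly_Mapping.single m 1)" if "m \<in> Poly_Mapping.keys a" for m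
  proof -
    from mono[OF that] have h1: "P (Poly_Mapping.single m 1)" and h2: "Poly_Mapping.single m 1 \<in> poly_in n" by auto
    have c: "const_mp (Poly_Mapping.lookup a m) \<in> poly_in n" by simp
    show ?thesis using poly_in_mult[OF c h2] M[OF c h2 C h1] by blast
  qed
  have "P (\<Sum>m\<in>Poly_Mapping.keys a. const_mp (Poly_Mapping.lookup a m) * Poly_Mapping.single m 1)"
    using S[of "Poly_Mapping.keys a" "\<lambda>m. const_mp (Poly_Mapping.lookup a m) * Poly_Mapping.single m 1", OF T] by blast
  then show ?thesis by (simp only: poly_expand_mono[of a, symmetric])
qed



subsection \<open>Derivatives\<close>

lemma finite_deriv_support:
  "finite {m. (of_nat (Poly_Mapping.lookup m j + 1) :: complex) * Poly_Mapping.lookup (a::mpoly) (m + Poly_Mapping.single j 1) \<noteq> 0}"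
proof -
  have "{m. (of_nat (Poly_Mapping.lookup m j + 1) :: complex) * Poly_Mapping.lookup a (m + Poly_Mapping.single j 1) \<noteq> 0}
     \<subseteq> (\<lambda>m. m + Poly_Mapping.single j 1) -` Poly_Mapping.keys a"
    by (auto simp: in_keys_iff)
  moreover have "finite ((\<lambda>m. m + Poly_Mapping.single j (1::nat)) -` Poly_Mapping.keys a)"
    by (rule finite_vimageI) (auto simp: inj_on_def)
  ultimately show ?thesis by (rule finite_subset)
qed

definition deriv :: "nat \<Rightarrow> mpoly \<Rightarrow> mpoly" where
  "deriv j a = Abs_poly_mapping (\<lambda>m. of_nat (Poly_Mapping.lookup m j + 1) * Poly_Mapping.lookup a (m + Poly_Mapping.single j 1))"

lemma lookup_deriv: "Poly_Mapping.lookup (deriv j a) m = of_nat (Poly_Mapping.lookup m j + 1) * Poly_Mapping.lookup a (m + Poly_Mapping.single j 1)"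
  unfolding deriv_def using finite_deriv_support[of j a] by simp

lemma deriv_add: "deriv j (a + b) = deriv j a + deriv j b"
  by (rule poly_mapping_eqI) (simp add: lookup_deriv lookup_add algebra_simps)

lemma deriv_0[simp]: "deriv j 0 = 0"
  by (rule poly_mapping_eqI) (simp add: lookup_deriv)

lemma deriv_sum: "deriv j (sum g I) = (\<Sum>i\<in>I. deriv j (g i))"
  by (induction I rule: infinite_finite_induct) (auto simp: deriv_add)

lemma deriv_const_mult: "deriv j (const_mp c * a) = const_mp c * deriv j a"
  by (rule poly_mapping_eqI) (simp add: lookup_deriv lookup_const_mult mult.left_commute)

lemma nat_pm_eq: "(m::nat \<Rightarrow>\<^sub>0 nat) = m' \<longleftrightarrow> (\<forall>k. Poly_Mapping.lookup m k = Poly_Mapping.lookup m' k)"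
  using poly_mapping_eqI by auto

lemma deriv_single: "deriv j (Poly_Mapping.single m c) =
   Poly_Mapping.single (m - Poly_Mapping.single j 1) (of_nat (Poly_Mapping.lookup m j) * c)"
proof (rule poly_mapping_eqI)
  fix m'
  let ?d = "Poly_Mapping.single j (1::nat)"
  show "Poly_Mapping.lookup (deriv j (Poly_Mapping.single m c)) m' =
    Poly_Mapping.lookup (Poly_Mapping.single (m - ?d) (of_nat (Poly_Mapping.lookup m j) * c)) m'"
  proof (cases "m = m' + ?d")
    case True
    then have "m - ?d = m'" by (simp add: nat_pm_eq lookup_minus lookup_add)
    moreover have "Poly_Mapping.lookup m j = Poly_Mapping.lookup m' j + 1"
      using True by (simp add: lookup_add)
    ultimately show ?thesis using True by (simp add: lookup_deriv lookup_single)
  next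
    case False
    have "Poly_Mapping.lookup (Poly_Mapping.single (m - ?d) (of_nat (Poly_Mapping.lookup m j) * c)) m' = 0"
    proof (cases "Poly_Mapping.lookup m j = 0")
      case True then show ?thesis by simp
    next
      case nz: False
      have "m - ?d \<noteq> m'"
      proof
        assume h: "m - ?d = m'"
        have "m = m' + ?d"
        proof (rule poly_mapping_eqI)
          fix k
          have "Poly_Mapping.lookup m k - Poly_Mapping.lookup ?d k = Poly_Mapping.lookup m' k"
            using h by (metis lookup_minus)
          then show "Poly_Mapping.lookup m k = Poly_Mapping.lookup (m' + ?d) k" using nz
            by (cases "k = j") (auto simp: lookup_add lookup_single)
        qed
        with False show False by simp
      qed
      then show ?thesis by (simp add: lookup_single when_def)
    qed
    then show ?thesis using False by (simp add: lookup_deriv lookup_single when_def)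
  qed
qed

lemma deriv_single_mult_single:
  "deriv j (Poly_Mapping.single m1 c1 * Poly_Mapping.single m2 c2) =
    deriv j (Poly_Mapping.single m1 c1) * Poly_Mapping.single m2 c2 + Poly_Mapping.single m1 c1 * deriv j (Poly_Mapping.single m2 c2)"
proof -
  let ?d = "Poly_Mapping.single j (1::nat)"
  let ?a = "Poly_Mapping.lookup m1 j" and ?b = "Poly_Mapping.lookup m2 j"
  have L: "deriv j (Poly_Mapping.single m1 c1 * Poly_Mapping.single m2 c2)
     = Poly_Mapping.single (m1 + m2 - ?d) (of_nat (?a + ?b) * (c1 * c2))"
    by (simp add: mult_single deriv_single lookup_add)
  have R: "deriv j (Poly_Mapping.single m1 c1) * Poly_Mapping.single m2 c2 + Poly_Mapping.single m1 c1 * deriv j (Poly_Mapping.single m2 c2)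
     = Poly_Mapping.single (m1 - ?d + m2) (of_nat ?a * c1 * c2) + Poly_Mapping.single (m1 + (m2 - ?d)) (c1 * (of_nat ?b * c2))"
    by (simp add: mult_single deriv_single)
  have f1: "Poly_Mapping.single (m1 - ?d + m2) (of_nat ?a * c1 * c2) = Poly_Mapping.single (m1 + m2 - ?d) (of_nat ?a * c1 * c2)"
  proof (cases "?a = 0")
    case False
    then have "m1 - ?d + m2 = m1 + m2 - ?d"
      by (auto simp: nat_pm_eq lookup_minus lookup_add lookup_single when_def)
    then show ?thesis by simp
  qed simp
  have f2: "Poly_Mapping.single (m1 + (m2 - ?d)) (c1 * (of_nat ?b * c2)) = Poly_Mapping.single (m1 + m2 - ?d) (c1 * (of_nat ?b * c2))"
  proof (cases "?b = 0")
    case False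
    then have "m1 + (m2 - ?d) = m1 + m2 - ?d"
      by (auto simp: nat_pm_eq lookup_minus lookup_add lookup_single when_def)
    then show ?thesis by simp
  qed simp
  have coeff: "(of_nat (?a + ?b) * (c1 * c2) :: complex) = of_nat ?a * c1 * c2 + c1 * (of_nat ?b * c2)"
    by (simp add: algebra_simps)
  show ?thesis
    by (simp only: L R f1 f2 coeff single_add)
qed

lemma deriv_single_mult: "deriv j (Poly_Mapping.single m c * b) = deriv j (Poly_Mapping.single m c) * b + Poly_Mapping.single m c * deriv j b"
proof -
  have "deriv j (Poly_Mapping.single m c * b) = deriv j (\<Sum>l\<in>Poly_Mapping.keys b. Poly_Mapping.single m c * Poly_Mapping.single l (Poly_Mapping.lookup b l))"
    by (subst poly_expand[of b]) (simp add: sum_distrib_left)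
  also have "\<dots> = (\<Sum>l\<in>Poly_Mapping.keys b. deriv j (Poly_Mapping.single m c) * Poly_Mapping.single l (Poly_Mapping.lookup b l)
      + Poly_Mapping.single m c * deriv j (Poly_Mapping.single l (Poly_Mapping.lookup b l)))"
    by (simp add: deriv_sum deriv_single_mult_single)
  also have "\<dots> = deriv j (Poly_Mapping.single m c) * (\<Sum>l\<in>Poly_Mapping.keys b. Poly_Mapping.single l (Poly_Mapping.lookup b l))
      + Poly_Mapping.single m c * deriv j (\<Sum>l\<in>Poly_Mapping.keys b. Poly_Mapping.single l (Poly_Mapping.lookup b l))"
    by (simp add: sum.distrib sum_distrib_left deriv_sum)
  also have "\<dots> = deriv j (Poly_Mapping.single m c) * b + Poly_Mapping.single m c * deriv j b"
    using poly_expand[of b, symmetric] by simp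
  finally show ?thesis .
qed

lemma deriv_mult: "deriv j (a * b) = deriv j a * b + a * deriv j b"
proof -
  have "deriv j (a * b) = deriv j (\<Sum>l\<in>Poly_Mapping.keys a. Poly_Mapping.single l (Poly_Mapping.lookup a l) * b)"
    by (subst poly_expand[of a]) (simp add: sum_distrib_right)
  also have "\<dots> = (\<Sum>l\<in>Poly_Mapping.keys a. deriv j (Poly_Mapping.single l (Poly_Mapping.lookup a l)) * b
      + Poly_Mapping.single l (Poly_Mapping.lookup a l) * deriv j b)"
    by (simp add: deriv_sum deriv_single_mult)
  also have "\<dots> = deriv j (\<Sum>l\<in>Poly_Mapping.keys a. Poly_Mapping.single l (Poly_Mapping.lookup a l)) * b
      + (\<Sum>l\<in>Poly_Mapping.keys a. Poly_Mapping.single l (Poly_Mapping.lookup a l)) * deriv j b"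
    by (simp add: sum.distrib sum_distrib_right deriv_sum)
  also have "\<dots> = deriv j a * b + a * deriv j b"
    using poly_expand[of a, symmetric] by simp
  finally show ?thesis .
qed

lemma deriv_Var: "deriv j (Var k) = (if j = k then 1 else 0)"
  by (auto simp: Var_def deriv_single lookup_single)

lemma deriv_const[simp]: "deriv j (const_mp c) = 0"
  by (simp add: const_mp_def deriv_single)

lemma keys_deriv: "m \<in> Poly_Mapping.keys (deriv j a) \<Longrightarrow> m + Poly_Mapping.single j 1 \<in> Poly_Mapping.keys a"
  by (auto simp: in_keys_iff lookup_deriv)

lemma deriv_poly_in: "a \<in> poly_in n \<Longrightarrow> deriv j a \<in> poly_in n"
proof (rule poly_inI)
  fix m v assume a: "a \<in> poly_in n" and m: "m \<in> Poly_Mapping.keys (deriv j a)" and v: "v \<in> Poly_Mapping.keys m"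
  have "v \<in> Poly_Mapping.keys (m + Poly_Mapping.single j 1)"
    using v by (auto simp: in_keys_iff lookup_add)
  then show "v < n" using poly_inD[OF a keys_deriv[OF m]] by blast
qed

lemma deriv_out: "a \<in> poly_in n \<Longrightarrow> n \<le> j \<Longrightarrow> deriv j a = 0"
proof (rule poly_mapping_eqI)
  fix m assume a: "a \<in> poly_in n" and j: "n \<le> j"
  have "m + Poly_Mapping.single j 1 \<notin> Poly_Mapping.keys a"
  proof
    assume "m + Poly_Mapping.single j 1 \<in> Poly_Mapping.keys a"
    moreover have "j \<in> Poly_Mapping.keys (m + Poly_Mapping.single j 1)"
      by (simp add: in_keys_iff lookup_add)
    ultimately have "j < n" using poly_inD[OF a] by blast
    with j show False by simp
  qed
  then show "Poly_Mapping.lookup (deriv j a) m = Poly_Mapping.lookup 0 m"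
    by (simp add: lookup_deriv in_keys_iff)
qed

lemma deriv_zero_in:
  assumes a: "a \<in> poly_in N" and D: "\<And>j. n \<le> j \<Longrightarrow> j < N \<Longrightarrow> deriv j a = 0"
  shows "a \<in> poly_in n"
proof (rule poly_inI, rule ccontr)
  fix m v assume m: "m \<in> Poly_Mapping.keys a" and v: "v \<in> Poly_Mapping.keys m" and nv: "\<not> v < n"
  have vN: "v < N" using poly_inD[OF a m v] .
  let ?d = "Poly_Mapping.single v (1::nat)"
  have pos: "Poly_Mapping.lookup m v \<noteq> 0" using v by (simp add: in_keys_iff)
  have "m - ?d + ?d = m" using pos
    by (auto simp: nat_pm_eq lookup_minus lookup_add lookup_single when_def)
  then have "Poly_Mapping.lookup (deriv v a) (m - ?d) = of_nat (Poly_Mapping.lookup (m - ?d) v + 1) * Poly_Mapping.lookup a m"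
    by (simp add: lookup_deriv)
  moreover have "Poly_Mapping.lookup a m \<noteq> 0" using m by (simp add: in_keys_iff)
  moreover have "(of_nat (Poly_Mapping.lookup (m - ?d) v + 1) :: complex) \<noteq> 0"
    by (simp only: of_nat_eq_0_iff)
  ultimately have "Poly_Mapping.lookup (deriv v a) (m - ?d) \<noteq> 0" by simp
  then have "deriv v a \<noteq> 0" by auto
  with D[of v] nv vN show False by simp
qed



locale ahom =
  fixes N :: nat and f :: "mpoly \<Rightarrow> mpoly"
  assumes hadd: "a \<in> poly_in N \<Longrightarrow> b \<in> poly_in N \<Longrightarrow> f (a + b) = f a + f b"
    and hmult: "a \<in> poly_in N \<Longrightarrow> b \<in> poly_in N \<Longrightarrow> f (a * b) = f a * f b"
    and hsmult: "a \<in> poly_in N \<Longrightarrow> f (const_mp c * a) = const_mp c * f a"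
    and hone: "f 1 = 1"
begin

lemma hzero: "f 0 = 0"
proof -
  have "f (0 + 0) = f 0 + f 0" by (rule hadd) simp_all
  then show ?thesis by simp
qed

lemma hconst: "f (const_mp c) = const_mp c"
  using hsmult[of 1 c] hone by simp

lemma hsum: "(\<And>i. i \<in> I \<Longrightarrow> g i \<in> poly_in N) \<Longrightarrow> f (sum g I) = (\<Sum>i\<in>I. f (g i))"
proof (induction I rule: infinite_finite_induct)
  case (infinite A) then show ?case by (simp add: hzero)
next
  case empty then show ?case by (simp add: hzero)
next
  case (insert x F)
  have "f (sum g (insert x F)) = f (g x + sum g F)" using insert.hyps by simp
  also have "\<dots> = f (g x) + f (sum g F)"
    by (rule hadd) (use insert.prems in \<open>auto intro: poly_in_sum\<close>)
  finally show ?case using insert by simp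
qed

lemma hprod: "(\<And>i. i \<in> I \<Longrightarrow> g i \<in> poly_in N) \<Longrightarrow> f (prod g I) = (\<Prod>i\<in>I. f (g i))"
proof (induction I rule: infinite_finite_induct)
  case (infinite A) then show ?case by (simp add: hone)
next
  case empty then show ?case by (simp add: hone)
next
  case (insert x F)
  have "f (prod g (insert x F)) = f (g x * prod g F)" using insert.hyps by simp
  also have "\<dots> = f (g x) * f (prod g F)"
    by (rule hmult) (use insert.prems in \<open>auto intro: poly_in_prod\<close>)
  finally show ?case using insert by simp
qed

lemma hpow: "a \<in> poly_in N \<Longrightarrow> f (a ^ e) = f a ^ e"
proof (induction e)
  case 0 then show ?case by (simp add: hone)
next
  case (Suc e)
  have "f (a ^ Suc e) = f (a * a ^ e)" by simp
  also have "\<dots> = f a * f (a ^ e)" using Suc.prems by (simp add: hmult poly_in_power)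
  finally show ?case using Suc by simp
qed

lemma chain:
  assumes "a \<in> poly_in N"
  shows "deriv l (f a) = (\<Sum>i<N. f (deriv i a) * deriv l (f (Var i)))"
  using assms
proof (induction rule: poly_in_induct)
  case (const c)
  then show ?case by (simp add: hconst hzero)
next
  case (Var k)
  have "(\<Sum>i<N. f (deriv i (Var k)) * deriv l (f (Var i))) = (\<Sum>i<N. if i = k then deriv l (f (Var i)) else 0)"
    by (rule sum.cong) (auto simp: deriv_Var hone hzero)
  also have "\<dots> = deriv l (f (Var k))" using Var by (simp add: sum.delta)
  finally show ?case by simp
next
  case (add a b)
  have "deriv l (f (a + b)) = deriv l (f a) + deriv l (f b)"
    using add by (simp add: hadd deriv_add)
  also have "\<dots> = (\<Sum>i<N. f (deriv i (a + b)) * deriv l (f (Var i)))"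
    using add by (simp add: add.IH deriv_add hadd deriv_poly_in sum.distrib[symmetric] distrib_right)
  finally show ?case .
next
  case (mult a b)
  have "deriv l (f (a * b)) = deriv l (f a) * f b + f a * deriv l (f b)"
    using mult by (simp add: hmult deriv_mult)
  also have "\<dots> = (\<Sum>i<N. (f (deriv i a) * f b + f a * f (deriv i b)) * deriv l (f (Var i)))"
    using mult by (simp add: sum_distrib_left sum_distrib_right sum.distrib[symmetric] algebra_simps)
  also have "\<dots> = (\<Sum>i<N. f (deriv i (a * b)) * deriv l (f (Var i)))"
    using mult by (simp add: deriv_mult hadd hmult deriv_poly_in poly_in_mult)
  finally show ?case .
qed

end

subsection \<open>Homogeneous components w.r.t. one variable\<close>

definition comp :: "nat \<Rightarrow> nat \<Rightarrow> mpoly \<Rightarrow> mpoly" where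
  "comp j e a = (\<Sum>m\<in>{m\<in>Poly_Mapping.keys a. Poly_Mapping.lookup m j = e}. Poly_Mapping.single m (Poly_Mapping.lookup a m))"

lemma lookup_comp: "Poly_Mapping.lookup (comp j e a) m = (if Poly_Mapping.lookup m j = e then Poly_Mapping.lookup a m else 0)"
proof -
  have "Poly_Mapping.lookup (comp j e a) m =
    (\<Sum>m'\<in>{m\<in>Poly_Mapping.keys a. Poly_Mapping.lookup m j = e}. if m' = m then Poly_Mapping.lookup a m' else 0)"
    unfolding comp_def lookup_sum by (rule sum.cong) (auto simp: lookup_single when_def)
  also have "\<dots> = (if Poly_Mapping.lookup m j = e then Poly_Mapping.lookup a m else 0)"
    by (auto simp: sum.delta in_keys_iff)
  finally show ?thesis .
qed

definition low :: "nat \<Rightarrow> nat \<Rightarrow> mpoly \<Rightarrow> bool" where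
  "low j d a \<longleftrightarrow> (\<forall>m\<in>Poly_Mapping.keys a. Poly_Mapping.lookup m j \<le> d)"

lemma comp_add: "comp j e (a + b) = comp j e a + comp j e b"
  by (rule poly_mapping_eqI) (simp add: lookup_comp lookup_add)

lemma comp_zero[simp]: "comp j e 0 = 0"
  by (rule poly_mapping_eqI) (simp add: lookup_comp)

lemma comp_const_mult: "comp j e (const_mp c * a) = const_mp c * comp j e a"
  by (rule poly_mapping_eqI) (simp add: lookup_comp lookup_const_mult)

lemma comp_sum: "comp j e (sum g I) = (\<Sum>i\<in>I. comp j e (g i))"
  by (induction I rule: infinite_finite_induct) (auto simp: comp_add)

lemma comp_none: "(\<And>m. m \<in> Poly_Mapping.keys a \<Longrightarrow> Poly_Mapping.lookup m j \<noteq> e) \<Longrightarrow> comp j e a = 0"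
  by (rule poly_mapping_eqI) (auto simp: lookup_comp in_keys_iff)

lemma comp_all: "(\<And>m. m \<in> Poly_Mapping.keys a \<Longrightarrow> Poly_Mapping.lookup m j = e) \<Longrightarrow> comp j e a = a"
  by (rule poly_mapping_eqI) (auto simp: lookup_comp in_keys_iff)

lemma keys_mult_deg:
  assumes "m \<in> Poly_Mapping.keys (x * y)"
  obtains m1 m2 where "m1 \<in> Poly_Mapping.keys x" "m2 \<in> Poly_Mapping.keys y"
    "Poly_Mapping.lookup m j = Poly_Mapping.lookup m1 j + Poly_Mapping.lookup m2 j"
  using assms keys_mult[of x y] by (auto simp: lookup_add)

lemma low_mult: "low j d1 a \<Longrightarrow> low j d2 b \<Longrightarrow> low j (d1 + d2) (a * b)"
  unfolding low_def
  by (metis add_mono keys_mult_deg)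

lemma keys_comp: "m \<in> Poly_Mapping.keys (comp j e a) \<Longrightarrow> Poly_Mapping.lookup m j = e"
  by (auto simp: in_keys_iff lookup_comp split: if_splits)

lemma keys_rest: "low j d a \<Longrightarrow> m \<in> Poly_Mapping.keys (a - comp j d a) \<Longrightarrow> Poly_Mapping.lookup m j < d"
  unfolding low_def
  by (auto simp: in_keys_iff lookup_comp lookup_minus split: if_splits)
     (metis in_keys_iff le_neq_implies_less)

lemma comp_mult:
  assumes a: "low j d1 a" and b: "low j d2 b"
  shows "comp j (d1 + d2) (a * b) = comp j d1 a * comp j d2 b"
proof -
  define ca where "ca = comp j d1 a"
  define cb where "cb = comp j d2 b"
  define ra where "ra = a - ca"
  define rb where "rb = b - cb"
  have ka: "\<And>m. m \<in> Poly_Mapping.keys ca \<Longrightarrow> Poly_Mapping.lookup m j = d1" unfolding ca_def by (rule keys_comp)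
  have kb: "\<And>m. m \<in> Poly_Mapping.keys cb \<Longrightarrow> Poly_Mapping.lookup m j = d2" unfolding cb_def by (rule keys_comp)
  have kra: "\<And>m. m \<in> Poly_Mapping.keys ra \<Longrightarrow> Poly_Mapping.lookup m j < d1" unfolding ra_def ca_def by (rule keys_rest[OF a])
  have krb: "\<And>m. m \<in> Poly_Mapping.keys rb \<Longrightarrow> Poly_Mapping.lookup m j < d2" unfolding rb_def cb_def by (rule keys_rest[OF b])
  have "a * b = ca * cb + (ca * rb + (ra * cb + ra * rb))"
    unfolding ra_def rb_def by (simp add: algebra_simps)
  moreover have "comp j (d1 + d2) (ca * cb) = ca * cb"
proof (rule comp_all)
    fix m assume "m \<in> Poly_Mapping.keys (ca * cb)"
    then obtain m1 m2 where m12: "m1 \<in> Poly_Mapping.keys ca" "m2 \<in> Poly_Mapping.keys cb"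
      "Poly_Mapping.lookup m j = Poly_Mapping.lookup m1 j + Poly_Mapping.lookup m2 j" by (rule keys_mult_deg)
    show "Poly_Mapping.lookup m j = d1 + d2" using ka[OF m12(1)] kb[OF m12(2)] m12(3) by linarith
  qed
  moreover have "comp j (d1 + d2) (ca * rb) = 0"
proof (rule comp_none)
    fix m assume "m \<in> Poly_Mapping.keys (ca * rb)"
    then obtain m1 m2 where m12: "m1 \<in> Poly_Mapping.keys ca" "m2 \<in> Poly_Mapping.keys rb"
      "Poly_Mapping.lookup m j = Poly_Mapping.lookup m1 j + Poly_Mapping.lookup m2 j" by (rule keys_mult_deg)
    show "Poly_Mapping.lookup m j \<noteq> d1 + d2" using ka[OF m12(1)] krb[OF m12(2)] m12(3) by linarith
  qed
  moreover have "comp j (d1 + d2) (ra * cb) = 0"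
proof (rule comp_none)
    fix m assume "m \<in> Poly_Mapping.keys (ra * cb)"
    then obtain m1 m2 where m12: "m1 \<in> Poly_Mapping.keys ra" "m2 \<in> Poly_Mapping.keys cb"
      "Poly_Mapping.lookup m j = Poly_Mapping.lookup m1 j + Poly_Mapping.lookup m2 j" by (rule keys_mult_deg)
    show "Poly_Mapping.lookup m j \<noteq> d1 + d2" using kra[OF m12(1)] kb[OF m12(2)] m12(3) by linarith
  qed
  moreover have "comp j (d1 + d2) (ra * rb) = 0"
proof (rule comp_none)
    fix m assume "m \<in> Poly_Mapping.keys (ra * rb)"
    then obtain m1 m2 where m12: "m1 \<in> Poly_Mapping.keys ra" "m2 \<in> Poly_Mapping.keys rb"
      "Poly_Mapping.lookup m j = Poly_Mapping.lookup m1 j + Poly_Mapping.lookup m2 j" by (rule keys_mult_deg)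
    show "Poly_Mapping.lookup m j \<noteq> d1 + d2" using kra[OF m12(1)] krb[OF m12(2)] m12(3) by linarith
  qed
  ultimately show ?thesis by (simp add: comp_add ca_def cb_def)
qed

lemma comp_above: "low j d a \<Longrightarrow> d < e \<Longrightarrow> comp j e a = 0"
  unfolding low_def by (rule comp_none) auto

lemma low0_comp: "low j 0 a \<Longrightarrow> comp j 0 a = a"
  unfolding low_def by (rule comp_all) auto

lemma top_exists:
  assumes "a \<noteq> 0"
  shows "\<exists>d. low j d a \<and> comp j d a \<noteq> 0"
proof -
  let ?S = "(\<lambda>m. Poly_Mapping.lookup m j) ` Poly_Mapping.keys a"
  have fin: "finite ?S" by simp
  have ne: "?S \<noteq> {}" using assms by simp
  define d where "d = Max ?S"
  have "d \<in> ?S" unfolding d_def using fin ne by (rule Max_in)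
  then obtain m0 where m0: "m0 \<in> Poly_Mapping.keys a" "Poly_Mapping.lookup m0 j = d" by auto
  have "low j d a" unfolding low_def d_def using fin by auto
  moreover have "Poly_Mapping.lookup (comp j d a) m0 \<noteq> 0"
    using m0 by (simp add: lookup_comp in_keys_iff)
  then have "comp j d a \<noteq> 0" by auto
  ultimately show ?thesis by blast
qed

lemma low_one: "low j 0 1" by (simp add: low_def)
lemma comp_one: "comp j 0 1 = 1" by (rule low0_comp[OF low_one])

lemma low_pow:
  assumes "low j d g"
  shows "low j (e * d) (g ^ e) \<and> comp j (e * d) (g ^ e) = comp j d g ^ e"
proof (induction e)
  case 0 then show ?case by (simp add: low_one comp_one)
next
  case (Suc e)
  have "low j (d + e * d) (g * g ^ e)" using low_mult[OF assms] Suc by blast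
  moreover have "comp j (d + e * d) (g * g ^ e) = comp j d g * comp j (e * d) (g ^ e)"
    using comp_mult[OF assms] Suc by blast
  ultimately show ?case using Suc by simp
qed

lemma low_prod:
  assumes "finite K" "\<And>k. k \<in> K \<Longrightarrow> low j (d k) (g k)"
  shows "low j (\<Sum>k\<in>K. e k * d k) (\<Prod>k\<in>K. g k ^ e k) \<and>
    comp j (\<Sum>k\<in>K. e k * d k) (\<Prod>k\<in>K. g k ^ e k) = (\<Prod>k\<in>K. comp j (d k) (g k) ^ e k)"
  using assms
proof (induction K rule: finite_induct)
  case empty then show ?case by (simp add: low_one comp_one)
next
  case (insert x F)
  have px: "low j (e x * d x) (g x ^ e x)" "comp j (e x * d x) (g x ^ e x) = comp j (d x) (g x) ^ e x"
    using low_pow[OF insert.prems[of x]] by auto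
  have pF: "low j (\<Sum>k\<in>F. e k * d k) (\<Prod>k\<in>F. g k ^ e k)"
    "comp j (\<Sum>k\<in>F. e k * d k) (\<Prod>k\<in>F. g k ^ e k) = (\<Prod>k\<in>F. comp j (d k) (g k) ^ e k)"
    using insert by auto
  show ?case
    using low_mult[OF px(1) pF(1)] comp_mult[OF px(1) pF(1)] px(2) pF(2) insert.hyps by simp
qed

lemma poly_in_low: "a \<in> poly_in n \<Longrightarrow> n \<le> j \<Longrightarrow> low j 0 a"
  unfolding low_def by (auto simp: in_keys_iff dest: poly_inD)

lemma low_all_poly_in: "(\<And>j. n \<le> j \<Longrightarrow> low j 0 a) \<Longrightarrow> a \<in> poly_in n"
  by (rule poly_inI) (metis in_keys_iff le_zero_eq low_def not_le)



lemma Var_nz: "Var k \<noteq> 0"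
proof
  assume "Var k = 0"
  then have "Poly_Mapping.lookup (Var k) (Poly_Mapping.single k 1) = 0" by simp
  then show False by (simp add: Var_def)
qed

lemma C1:
  fixes n N :: nat and p q :: mpoly and M :: "nat \<Rightarrow>\<^sub>0 nat" and \<phi> :: "mpoly \<Rightarrow> mpoly"
  assumes hom: "ahom N \<phi>" and inj: "inj_on \<phi> (poly_in N)"
    and maps: "\<And>a. a \<in> poly_in N \<Longrightarrow> \<phi> a \<in> poly_in N"
    and p: "p \<in> poly_in n" and Mpos: "\<forall>k<n. Poly_Mapping.lookup M k > 0"
    and pM: "Poly_Mapping.lookup p M = 1"
    and ple: "\<forall>m \<in> Poly_Mapping.keys p. \<forall>k. Poly_Mapping.lookup m k \<le> Poly_Mapping.lookup M k"
    and q: "q \<in> poly_in n" and nN: "n \<le> N" and pq: "\<phi> p = q" and k0: "k0 < n"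
  shows "\<phi> (Var k0) \<in> poly_in n"
proof -
  interpret ahom N \<phi> by (rule hom)
  define f where "f k = \<phi> (Var k)" for k
  have VN: "\<And>k. k < n \<Longrightarrow> Var k \<in> poly_in N" using nN by (auto intro: poly_in_Var)
  have fN: "\<And>k. k < n \<Longrightarrow> f k \<in> poly_in N" using maps VN by (auto simp: f_def)
  have phi_nz: "\<And>a. a \<in> poly_in N \<Longrightarrow> a \<noteq> 0 \<Longrightarrow> \<phi> a \<noteq> 0"
  proof
    fix a assume a: "a \<in> poly_in N" "a \<noteq> 0" "\<phi> a = 0"
    then have "\<phi> a = \<phi> 0" by (simp add: hzero)
    then have "a = 0" using inj_onD[OF inj _ a(1) poly_in_0] by blast
    with a show False by simp
  qed
  have fnz: "\<And>k. k < n \<Longrightarrow> f k \<noteq> 0" unfolding f_def using phi_nz VN Var_nz by blast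
  have pN: "p \<in> poly_in N" using poly_in_mono[OF nN p] .
  have keysp: "\<And>m. m \<in> Poly_Mapping.keys p \<Longrightarrow> Poly_Mapping.keys m \<subseteq> {..<n}"
    using p by (auto dest: poly_inD)
  have peq: "p = (\<Sum>m\<in>Poly_Mapping.keys p. const_mp (Poly_Mapping.lookup p m) * (\<Prod>k<n. Var k ^ Poly_Mapping.lookup m k))"
  proof -
    have "(\<Sum>m\<in>Poly_Mapping.keys p. const_mp (Poly_Mapping.lookup p m) * Poly_Mapping.single m 1)
       = (\<Sum>m\<in>Poly_Mapping.keys p. const_mp (Poly_Mapping.lookup p m) * (\<Prod>k<n. Var k ^ Poly_Mapping.lookup m k))"
      by (rule sum.cong[OF refl]) (simp add: mono_prod[OF _ keysp])
    then show ?thesis by (simp only: poly_expand_mono[of p, symmetric])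
  qed
  have memt: "\<And>m. const_mp (Poly_Mapping.lookup p m) * (\<Prod>k<n. Var k ^ Poly_Mapping.lookup m k) \<in> poly_in N"
    by (intro poly_in_mult poly_in_const poly_in_prod poly_in_power VN) simp
  have E: "\<phi> p = (\<Sum>m\<in>Poly_Mapping.keys p. const_mp (Poly_Mapping.lookup p m) * (\<Prod>k<n. f k ^ Poly_Mapping.lookup m k))"
  proof -
    have "\<phi> p = \<phi> (\<Sum>m\<in>Poly_Mapping.keys p. const_mp (Poly_Mapping.lookup p m) * (\<Prod>k<n. Var k ^ Poly_Mapping.lookup m k))"
      using arg_cong[OF peq, of \<phi>] .
    also have "\<dots> = (\<Sum>m\<in>Poly_Mapping.keys p. \<phi> (const_mp (Poly_Mapping.lookup p m) * (\<Prod>k<n. Var k ^ Poly_Mapping.lookup m k)))"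
      by (rule hsum) (rule memt)
    also have "\<dots> = (\<Sum>m\<in>Poly_Mapping.keys p. const_mp (Poly_Mapping.lookup p m) * (\<Prod>k<n. f k ^ Poly_Mapping.lookup m k))"
    proof (rule sum.cong[OF refl])
      fix m
      have "\<phi> (const_mp (Poly_Mapping.lookup p m) * (\<Prod>k<n. Var k ^ Poly_Mapping.lookup m k))
          = const_mp (Poly_Mapping.lookup p m) * \<phi> (\<Prod>k<n. Var k ^ Poly_Mapping.lookup m k)"
        by (rule hsmult) (intro poly_in_prod poly_in_power VN, simp)
      also have "\<phi> (\<Prod>k<n. Var k ^ Poly_Mapping.lookup m k) = (\<Prod>k<n. \<phi> (Var k ^ Poly_Mapping.lookup m k))"
        by (rule hprod) (intro poly_in_power VN, simp)
      also have "\<dots> = (\<Prod>k<n. f k ^ Poly_Mapping.lookup m k)"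
        by (rule prod.cong[OF refl]) (simp add: f_def hpow VN)
      finally show "\<phi> (const_mp (Poly_Mapping.lookup p m) * (\<Prod>k<n. Var k ^ Poly_Mapping.lookup m k))
          = const_mp (Poly_Mapping.lookup p m) * (\<Prod>k<n. f k ^ Poly_Mapping.lookup m k)" .
    qed
    finally show ?thesis .
  qed
  have low_all: "low j 0 (f k0)" if j: "n \<le> j" for j
  proof (rule ccontr)
    assume nlow: "\<not> low j 0 (f k0)"
    have "\<forall>k. \<exists>d. k < n \<longrightarrow> low j d (f k) \<and> comp j d (f k) \<noteq> 0"
      using top_exists fnz by blast
    then have "\<exists>d. \<forall>k. k < n \<longrightarrow> low j (d k) (f k) \<and> comp j (d k) (f k) \<noteq> 0"
      by (rule choice)
    then obtain d where d: "\<And>k. k < n \<Longrightarrow> low j (d k) (f k)" "\<And>k. k < n \<Longrightarrow> comp j (d k) (f k) \<noteq> 0"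
      by blast
    define t where "t k = comp j (d k) (f k)" for k
    have dk0: "0 < d k0" using nlow d(1)[OF k0] by (cases "d k0") auto
    define D0 where "D0 = (\<Sum>k<n. Poly_Mapping.lookup M k * d k)"
    have "Poly_Mapping.lookup M k0 * d k0 \<le> D0"
      unfolding D0_def by (rule member_le_sum) (use k0 in auto)
    moreover have "0 < Poly_Mapping.lookup M k0 * d k0" using Mpos k0 dk0 by simp
    ultimately have D0pos: "0 < D0" by linarith
    define Kp where "Kp = {m\<in>Poly_Mapping.keys p. \<forall>k<n. 0 < d k \<longrightarrow> Poly_Mapping.lookup m k = Poly_Mapping.lookup M k}"
    have finKp: "finite Kp" unfolding Kp_def by simp
    have MKp: "M \<in> Kp" using pM unfolding Kp_def by (simp add: in_keys_iff)
    have termE: "comp j D0 (\<Prod>k<n. f k ^ Poly_Mapping.lookup m k)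
        = (if m \<in> Kp then (\<Prod>k<n. t k ^ Poly_Mapping.lookup m k) else 0)" if m: "m \<in> Poly_Mapping.keys p" for m
    proof -
      have LP: "low j (\<Sum>k<n. Poly_Mapping.lookup m k * d k) (\<Prod>k<n. f k ^ Poly_Mapping.lookup m k)"
        "comp j (\<Sum>k<n. Poly_Mapping.lookup m k * d k) (\<Prod>k<n. f k ^ Poly_Mapping.lookup m k)
          = (\<Prod>k<n. t k ^ Poly_Mapping.lookup m k)"
        using low_prod[of "{..<n}" j d f "\<lambda>k. Poly_Mapping.lookup m k"] d(1) by (auto simp: t_def)
      show ?thesis
      proof (cases "m \<in> Kp")
        case True
        have "(\<Sum>k<n. Poly_Mapping.lookup m k * d k) = D0"
          unfolding D0_def
        proof (rule sum.cong[OF refl])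
          fix k assume "k \<in> {..<n}"
          then show "Poly_Mapping.lookup m k * d k = Poly_Mapping.lookup M k * d k"
            using True unfolding Kp_def by (cases "d k = 0") auto
        qed
        then show ?thesis using LP(2) True by simp
      next
        case False
        then obtain k1 where k1: "k1 < n" "0 < d k1" "Poly_Mapping.lookup m k1 \<noteq> Poly_Mapping.lookup M k1"
          using m unfolding Kp_def by blast
        have "(\<Sum>k<n. Poly_Mapping.lookup m k * d k) < D0"
          unfolding D0_def
        proof (rule sum_strict_mono_ex1)
          show "\<forall>x\<in>{..<n}. Poly_Mapping.lookup m x * d x \<le> Poly_Mapping.lookup M x * d x"
            using ple m by (auto intro: mult_le_mono1)
          have "Poly_Mapping.lookup m k1 < Poly_Mapping.lookup M k1" using ple m k1(3) by (metis le_neq_implies_less)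
          then show "\<exists>a\<in>{..<n}. Poly_Mapping.lookup m a * d a < Poly_Mapping.lookup M a * d a"
            using k1 by (intro bexI[of _ k1]) auto
        qed simp
        then show ?thesis using comp_above[OF LP(1)] False by simp
      qed
    qed
    have compE: "comp j D0 (\<phi> p) = (\<Sum>m\<in>Kp. const_mp (Poly_Mapping.lookup p m) * (\<Prod>k<n. t k ^ Poly_Mapping.lookup m k))"
    proof -
      have "comp j D0 (\<phi> p) = (\<Sum>m\<in>Poly_Mapping.keys p. const_mp (Poly_Mapping.lookup p m) * comp j D0 (\<Prod>k<n. f k ^ Poly_Mapping.lookup m k))"
        unfolding E comp_sum comp_const_mult ..
      also have "\<dots> = (\<Sum>m\<in>Poly_Mapping.keys p. if m \<in> Kp then const_mp (Poly_Mapping.lookup p m) * (\<Prod>k<n. t k ^ Poly_Mapping.lookup m k) else 0)"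
        by (rule sum.cong[OF refl]) (simp add: termE)
      also have "\<dots> = (\<Sum>m\<in>Kp. const_mp (Poly_Mapping.lookup p m) * (\<Prod>k<n. t k ^ Poly_Mapping.lookup m k))"
        unfolding Kp_def by (simp add: sum.inter_filter)
      finally show ?thesis .
    qed
    define X where "X = (\<Prod>k<n. if 0 < d k then t k ^ Poly_Mapping.lookup M k else 1)"
    define Q where "Q m = (\<Prod>k<n. if 0 < d k then 1 else f k ^ Poly_Mapping.lookup m k)" for m
    have fact: "(\<Prod>k<n. t k ^ Poly_Mapping.lookup m k) = X * Q m" if m: "m \<in> Kp" for m
      unfolding X_def Q_def prod.distrib[symmetric]
    proof (rule prod.cong[OF refl])
      fix k assume k: "k \<in> {..<n}"
      show "t k ^ Poly_Mapping.lookup m k = (if 0 < d k then t k ^ Poly_Mapping.lookup M k else 1) * (if 0 < d k then 1 else f k ^ Poly_Mapping.lookup m k)"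
      proof (cases "0 < d k")
        case True then show ?thesis using m k unfolding Kp_def by auto
      next
        case False
        then have "t k = f k" using low0_comp[of j "f k"] d(1)[of k] k unfolding t_def by simp
        then show ?thesis using False by simp
      qed
    qed
    define P where "P = (\<Sum>m\<in>Kp. const_mp (Poly_Mapping.lookup p m) * (\<Prod>k<n. if 0 < d k then 1 else Var k ^ Poly_Mapping.lookup m k))"
    have PN: "P \<in> poly_in N" unfolding P_def
      by (intro poly_in_sum poly_in_mult poly_in_const poly_in_prod) (auto intro: poly_in_power VN)
    have phiP: "\<phi> P = (\<Sum>m\<in>Kp. const_mp (Poly_Mapping.lookup p m) * Q m)"
    proof -
      have "\<phi> P = (\<Sum>m\<in>Kp. \<phi> (const_mp (Poly_Mapping.lookup p m) * (\<Prod>k<n. if 0 < d k then 1 else Var k ^ Poly_Mapping.lookup m k)))"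
        unfolding P_def
        by (rule hsum) (intro poly_in_mult poly_in_const poly_in_prod, auto intro: poly_in_power VN)
      also have "\<dots> = (\<Sum>m\<in>Kp. const_mp (Poly_Mapping.lookup p m) * Q m)"
      proof (rule sum.cong[OF refl])
        fix m
        have "\<phi> (const_mp (Poly_Mapping.lookup p m) * (\<Prod>k<n. if 0 < d k then 1 else Var k ^ Poly_Mapping.lookup m k))
          = const_mp (Poly_Mapping.lookup p m) * \<phi> (\<Prod>k<n. if 0 < d k then 1 else Var k ^ Poly_Mapping.lookup m k)"
          by (rule hsmult) (intro poly_in_prod, auto intro: poly_in_power VN)
        also have "\<phi> (\<Prod>k<n. if 0 < d k then 1 else Var k ^ Poly_Mapping.lookup m k)
          = (\<Prod>k<n. \<phi> (if 0 < d k then 1 else Var k ^ Poly_Mapping.lookup m k))"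
          by (rule hprod) (auto intro: poly_in_power VN)
        also have "\<dots> = Q m" unfolding Q_def
          by (rule prod.cong[OF refl]) (auto simp: hone hpow VN f_def)
        finally show "\<phi> (const_mp (Poly_Mapping.lookup p m) * (\<Prod>k<n. if 0 < d k then 1 else Var k ^ Poly_Mapping.lookup m k))
          = const_mp (Poly_Mapping.lookup p m) * Q m" .
      qed
      finally show ?thesis .
    qed
    have "comp j D0 (\<phi> p) = X * \<phi> P"
      unfolding compE phiP sum_distrib_left
      by (rule sum.cong[OF refl]) (simp add: fact mult.left_commute)
    moreover have "X \<noteq> 0"
      unfolding X_def using d(2) by (auto simp: t_def)
    moreover have "P \<noteq> 0"
    proof
      assume P0: "P = 0"
      define Y where "Y = (\<Prod>k<n. if 0 < d k then Var k ^ Poly_Mapping.lookup M k else 1)"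
      have "P * Y = (\<Sum>m\<in>Kp. const_mp (Poly_Mapping.lookup p m) * (\<Prod>k<n. Var k ^ Poly_Mapping.lookup m k))"
        unfolding P_def Y_def sum_distrib_right
      proof (rule sum.cong[OF refl])
        fix m assume m: "m \<in> Kp"
        have "(\<Prod>k<n. if 0 < d k then 1 else Var k ^ Poly_Mapping.lookup m k) * (\<Prod>k<n. if 0 < d k then Var k ^ Poly_Mapping.lookup M k else 1)
          = (\<Prod>k<n. Var k ^ Poly_Mapping.lookup m k)"
          unfolding prod.distrib[symmetric]
          by (rule prod.cong[OF refl]) (use m in \<open>auto simp: Kp_def\<close>)
        then show "const_mp (Poly_Mapping.lookup p m) * (\<Prod>k<n. if 0 < d k then 1 else Var k ^ Poly_Mapping.lookup m k) * (\<Prod>k<n. if 0 < d k then Var k ^ Poly_Mapping.lookup M k else 1)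
          = const_mp (Poly_Mapping.lookup p m) * (\<Prod>k<n. Var k ^ Poly_Mapping.lookup m k)"
          by (simp add: mult.assoc)
      qed
      also have "\<dots> = (\<Sum>m\<in>Kp. Poly_Mapping.single m (Poly_Mapping.lookup p m))"
      proof (rule sum.cong[OF refl])
        fix m assume m: "m \<in> Kp"
        then have "m \<in> Poly_Mapping.keys p" unfolding Kp_def by simp
        then have "Poly_Mapping.single m (1::complex) = (\<Prod>k<n. Var k ^ Poly_Mapping.lookup m k)"
          by (simp add: mono_prod[OF _ keysp])
        then show "const_mp (Poly_Mapping.lookup p m) * (\<Prod>k<n. Var k ^ Poly_Mapping.lookup m k) = Poly_Mapping.single m (Poly_Mapping.lookup p m)"
          by (simp add: single_as_const[of m "Poly_Mapping.lookup p m"])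
      qed
      finally have PY: "P * Y = (\<Sum>m\<in>Kp. Poly_Mapping.single m (Poly_Mapping.lookup p m))" .
      have "Poly_Mapping.lookup (P * Y) M = (\<Sum>m\<in>Kp. if m = M then Poly_Mapping.lookup p m else 0)"
        unfolding PY lookup_sum by (rule sum.cong[OF refl]) (auto simp: lookup_single when_def)
      also have "\<dots> = 1" using MKp finKp pM by (simp add: sum.delta')
      finally show False using P0 by simp
    qed
    then have "\<phi> P \<noteq> 0" using phi_nz PN by blast
    ultimately have "comp j D0 (\<phi> p) \<noteq> 0" by simp
    moreover have "comp j D0 (\<phi> p) = 0"
      using comp_above[OF poly_in_low[OF q j] D0pos] pq by simp
    ultimately show False by simp
  qed
  show ?thesis using low_all_poly_in[of n "f k0"] low_all unfolding f_def by blast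
qed



lemma inv_ahom:
  assumes hom: "ahom N \<phi>" and bij: "bij_betw \<phi> (poly_in N) (poly_in N)"
  shows "ahom N (inv_into (poly_in N) \<phi>)"
proof -
  interpret ahom N \<phi> by (rule hom)
  let ?\<psi> = "inv_into (poly_in N) \<phi>"
  have inj: "inj_on \<phi> (poly_in N)" using bij by (simp add: bij_betw_def)
  have img: "\<phi> ` poly_in N = poly_in N" using bij by (simp add: bij_betw_def)
  have psiN: "\<And>a. a \<in> poly_in N \<Longrightarrow> ?\<psi> a \<in> poly_in N"
    using img by (metis inv_into_into)
  have phipsi: "\<And>a. a \<in> poly_in N \<Longrightarrow> \<phi> (?\<psi> a) = a"
    using img by (metis f_inv_into_f)
  have psiphi: "\<And>a. a \<in> poly_in N \<Longrightarrow> ?\<psi> (\<phi> a) = a"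
    using inj by (metis inv_into_f_f)
  show ?thesis
  proof
    fix a b assume a: "a \<in> poly_in N" and b: "b \<in> poly_in N"
    have "?\<psi> (a + b) = ?\<psi> (\<phi> (?\<psi> a) + \<phi> (?\<psi> b))" using a b by (simp add: phipsi)
    also have "\<dots> = ?\<psi> (\<phi> (?\<psi> a + ?\<psi> b))" using a b psiN by (simp add: hadd)
    also have "\<dots> = ?\<psi> a + ?\<psi> b" using a b psiN by (simp add: psiphi poly_in_add)
    finally show "?\<psi> (a + b) = ?\<psi> a + ?\<psi> b" .
  next
    fix a b assume a: "a \<in> poly_in N" and b: "b \<in> poly_in N"
    have "?\<psi> (a * b) = ?\<psi> (\<phi> (?\<psi> a) * \<phi> (?\<psi> b))" using a b by (simp add: phipsi)
    also have "\<dots> = ?\<psi> (\<phi> (?\<psi> a * ?\<psi> b))" using a b psiN by (simp add: hmult)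
    also have "\<dots> = ?\<psi> a * ?\<psi> b" using a b psiN by (simp add: psiphi poly_in_mult)
    finally show "?\<psi> (a * b) = ?\<psi> a * ?\<psi> b" .
  next
    fix a c assume a: "a \<in> poly_in N"
    have "?\<psi> (const_mp c * a) = ?\<psi> (const_mp c * \<phi> (?\<psi> a))" using a by (simp add: phipsi)
    also have "\<dots> = ?\<psi> (\<phi> (const_mp c * ?\<psi> a))" using a psiN by (simp add: hsmult)
    also have "\<dots> = const_mp c * ?\<psi> a" using a psiN by (simp add: psiphi poly_in_mult)
    finally show "?\<psi> (const_mp c * a) = const_mp c * ?\<psi> a" .
  next
    show "?\<psi> 1 = 1" using psiphi[of 1] hone by simp
  qed
qed

lemma hom_image:
  assumes hom: "ahom N f" and nN: "n \<le> N" and V: "\<And>k. k < n \<Longrightarrow> f (Var k) \<in> poly_in n"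
    and a: "a \<in> poly_in n"
  shows "f a \<in> poly_in n"
  using a
proof (induction rule: poly_in_induct)
  case (const c) then show ?case using ahom.hconst[OF hom] by simp
next
  case (Var k) then show ?case by (rule V)
next
  case (add a b) then show ?case using ahom.hadd[OF hom] poly_in_mono[OF nN] by (simp add: poly_in_add)
next
  case (mult a b) then show ?case using ahom.hmult[OF hom] poly_in_mono[OF nN] by (simp add: poly_in_mult)
qed

lemma C3:
  fixes \<phi> \<psi> :: "mpoly \<Rightarrow> mpoly"
  assumes hpsi: "ahom N \<psi>" and nN: "n \<le> N"
    and fin: "\<And>k. k < n \<Longrightarrow> \<phi> (Var k) \<in> poly_in n"
    and psiphi: "\<And>k. k < n \<Longrightarrow> \<psi> (\<phi> (Var k)) = Var k"
    and psiN: "\<And>k. k < n \<Longrightarrow> \<psi> (Var k) \<in> poly_in N"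
    and i0: "i0 < n"
  shows "\<psi> (Var i0) \<in> poly_in n"
proof -
  interpret ahom N \<psi> by (rule hpsi)
  define A where "A k i = \<psi> (deriv i (\<phi> (Var k)))" for k i
  define B where "B i l = deriv l (\<psi> (Var i))" for i l
  have key: "deriv l (Var k) = (\<Sum>i<n. A k i * B i l)" if k: "k < n" for k l
  proof -
    have fkN: "\<phi> (Var k) \<in> poly_in N" using poly_in_mono[OF nN fin[OF k]] .
    have "deriv l (Var k) = deriv l (\<psi> (\<phi> (Var k)))" using psiphi[OF k] by simp
    also have "\<dots> = (\<Sum>i<N. \<psi> (deriv i (\<phi> (Var k))) * deriv l (\<psi> (Var i)))"
      by (rule chain[OF fkN])
    also have "\<dots> = (\<Sum>i<n. \<psi> (deriv i (\<phi> (Var k))) * deriv l (\<psi> (Var i)))"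
    proof (rule sum.mono_neutral_right)
      show "\<forall>i\<in>{..<N} - {..<n}. \<psi> (deriv i (\<phi> (Var k))) * deriv l (\<psi> (Var i)) = 0"
        using deriv_out[OF fin[OF k]] hzero by auto
    qed (use nN in auto)
    finally show ?thesis unfolding A_def B_def .
  qed
  define Am where "Am = mat n n (\<lambda>(k, i). A k i)"
  define Bm where "Bm = mat n n (\<lambda>(i, l). B i l)"
  have AmC: "Am \<in> carrier_mat n n" and BmC: "Bm \<in> carrier_mat n n" by (simp_all add: Am_def Bm_def)
  have AB: "Am * Bm = 1\<^sub>m n"
  proof (rule eq_matI)
    fix k l assume "k < dim_row (1\<^sub>m n :: mpoly mat)" "l < dim_col (1\<^sub>m n :: mpoly mat)"
    then have kl: "k < n" "l < n" by simp_all
    have "(Am * Bm) $$ (k, l) = (\<Sum>i\<in>{0..<n}. A k i * B i l)"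
      using kl by (simp add: Am_def Bm_def scalar_prod_def)
    also have "\<dots> = deriv l (Var k)" using key[OF kl(1)] by (simp add: atLeast0LessThan)
    also have "\<dots> = 1\<^sub>m n $$ (k, l)" using kl by (simp add: deriv_Var)
    finally show "(Am * Bm) $$ (k, l) = 1\<^sub>m n $$ (k, l)" .
  qed (simp_all add: Am_def Bm_def)
  have "det Am * det Bm = 1" using det_mult[OF AmC BmC] AB by simp
  then have detnz: "det Am \<noteq> 0" by auto
  have "deriv j (\<psi> (Var i0)) = 0" if j: "n \<le> j" for j
  proof -
    define v where "v = vec n (\<lambda>i. B i j)"
    have vC: "v \<in> carrier_vec n" by (simp add: v_def)
    have Av: "Am *\<^sub>v v = 0\<^sub>v n"
    proof (rule eq_vecI)
      fix k assume "k < dim_vec (0\<^sub>v n :: mpoly vec)"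
      then have k: "k < n" by simp
      have "(Am *\<^sub>v v) $ k = (\<Sum>i\<in>{0..<n}. A k i * B i j)"
        using k by (simp add: Am_def v_def scalar_prod_def)
      also have "\<dots> = deriv j (Var k)" using key[OF k] by (simp add: atLeast0LessThan)
      also have "\<dots> = 0" using k j by (simp add: deriv_Var)
      finally show "(Am *\<^sub>v v) $ k = 0\<^sub>v n $ k" using k by simp
    qed (simp add: Am_def)
    have adjC: "adj_mat Am \<in> carrier_mat n n" using adj_mat(1)[OF AmC] .
    have "(adj_mat Am * Am) *\<^sub>v v = adj_mat Am *\<^sub>v (Am *\<^sub>v v)"
      by (rule assoc_mult_mat_vec[OF adjC AmC vC])
    then have E: "(det Am \<cdot>\<^sub>m 1\<^sub>m n) *\<^sub>v v = adj_mat Am *\<^sub>v 0\<^sub>v n"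
      using adj_mat(3)[OF AmC] Av by simp
    have "((det Am \<cdot>\<^sub>m 1\<^sub>m n) *\<^sub>v v) $ i0 = det Am * v $ i0"
    proof -
      have "((det Am \<cdot>\<^sub>m 1\<^sub>m n) *\<^sub>v v) $ i0 = (\<Sum>l\<in>{0..<n}. (if i0 = l then det Am else 0) * v $ l)"
        using i0 by (simp add: scalar_prod_def v_def) (rule sum.cong, auto)
      also have "\<dots> = (\<Sum>l\<in>{0..<n}. if i0 = l then det Am * v $ l else 0)"
        by (rule sum.cong) auto
      also have "\<dots> = det Am * v $ i0" using i0 by (simp add: sum.delta)
      finally show ?thesis .
    qed
    moreover have "(adj_mat Am *\<^sub>v 0\<^sub>v n) $ i0 = 0"
      using i0 adjC by simp
    ultimately have "det Am * v $ i0 = 0" using E by simp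
    then have "v $ i0 = 0" using detnz by simp
    then show ?thesis using i0 by (simp add: v_def B_def)
  qed
  then show ?thesis using deriv_zero_in[OF psiN[OF i0]] by blast
qed

theorem proposition1p4:
  fixes n N :: nat and p q :: mpoly and M :: "nat \<Rightarrow>\<^sub>0 nat" and \<phi> :: "mpoly \<Rightarrow> mpoly"
  assumes "p \<in> poly_in n"
    and "\<forall>k<n. Poly_Mapping.lookup M k > 0"
    and "\<forall>k\<ge>n. Poly_Mapping.lookup M k = 0"
    and "Poly_Mapping.lookup p M = 1"
    and "\<forall>m \<in> Poly_Mapping.keys p. \<forall>k. Poly_Mapping.lookup m k \<le> Poly_Mapping.lookup M k"
    and "q \<in> poly_in n"
    and "N \<ge> n"
    and "is_alg_aut N \<phi>"
    and "\<phi> p = q"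
  shows "\<exists>\<alpha>. is_alg_aut n \<alpha> \<and> \<alpha> p = q"
proof -
  have aut: "is_alg_aut N \<phi>" by fact
  have nN: "n \<le> N" using assms(7) by simp
  have bij: "bij_betw \<phi> (poly_in N) (poly_in N)" using aut by (simp add: is_alg_aut_def)
  have hom: "ahom N \<phi>" using aut unfolding is_alg_aut_def by (intro ahom.intro) auto
  interpret ahom N \<phi> by (rule hom)
  have inj: "inj_on \<phi> (poly_in N)" using bij by (simp add: bij_betw_def)
  have img: "\<phi> ` poly_in N = poly_in N" using bij by (simp add: bij_betw_def)
  have maps: "\<And>a. a \<in> poly_in N \<Longrightarrow> \<phi> a \<in> poly_in N" using img by blast
  define \<psi> where "\<psi> = inv_into (poly_in N) \<phi>"
  have hpsi: "ahom N \<psi>" unfolding \<psi>_def by (rule inv_ahom[OF hom bij])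
  have psiphi: "\<And>a. a \<in> poly_in N \<Longrightarrow> \<psi> (\<phi> a) = a" unfolding \<psi>_def using inj by (metis inv_into_f_f)
  have phipsi: "\<And>a. a \<in> poly_in N \<Longrightarrow> \<phi> (\<psi> a) = a" unfolding \<psi>_def using img by (metis f_inv_into_f)
  have psiN: "\<And>a. a \<in> poly_in N \<Longrightarrow> \<psi> a \<in> poly_in N" unfolding \<psi>_def using img by (metis inv_into_into)
  have VN: "\<And>k. k < n \<Longrightarrow> Var k \<in> poly_in N" using nN by (auto intro: poly_in_Var)
  have fin: "\<And>k. k < n \<Longrightarrow> \<phi> (Var k) \<in> poly_in n"
    by (rule C1[OF hom inj maps assms(1) assms(2) assms(4) assms(5) assms(6) nN assms(9)])
  have hin: "\<And>k. k < n \<Longrightarrow> \<psi> (Var k) \<in> poly_in n"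
    by (rule C3[where N=N and \<psi>=\<psi> and n=n and \<phi>=\<phi>, OF hpsi nN fin]) (simp_all add: psiphi psiN VN)
  have phin: "\<And>a. a \<in> poly_in n \<Longrightarrow> \<phi> a \<in> poly_in n" by (rule hom_image[OF hom nN fin])
  have psin: "\<And>a. a \<in> poly_in n \<Longrightarrow> \<psi> a \<in> poly_in n" by (rule hom_image[OF hpsi nN hin])
  have sub: "poly_in n \<subseteq> poly_in N" using poly_in_mono[OF nN] by blast
  have "bij_betw \<phi> (poly_in n) (poly_in n)"
    unfolding bij_betw_def
  proof
    show "inj_on \<phi> (poly_in n)" using inj_on_subset[OF inj sub] .
    show "\<phi> ` poly_in n = poly_in n"
    proof
      show "\<phi> ` poly_in n \<subseteq> poly_in n" using phin by blast
      show "poly_in n \<subseteq> \<phi> ` poly_in n"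
      proof
        fix b assume b: "b \<in> poly_in n"
        then have "\<phi> (\<psi> b) = b" using phipsi sub by blast
        moreover have "\<psi> b \<in> poly_in n" using psin b by blast
        ultimately show "b \<in> \<phi> ` poly_in n" by (metis image_eqI)
      qed
    qed
  qed
  moreover have "\<forall>p\<in>poly_in n. \<forall>q\<in>poly_in n. \<phi> (p + q) = \<phi> p + \<phi> q" using hadd sub by blast
  moreover have "\<forall>p\<in>poly_in n. \<forall>q\<in>poly_in n. \<phi> (p * q) = \<phi> p * \<phi> q" using hmult sub by blast
  moreover have "\<forall>c. \<forall>p\<in>poly_in n. \<phi> (const_mp c * p) = const_mp c * \<phi> p" using hsmult sub by blast
  ultimately have "is_alg_aut n \<phi>" unfolding is_alg_aut_def using hone by blast
  then show ?thesis using assms(9) by blast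
qed


end
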